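(* Let $d\ge1$, $k\ge0$ be integers, let $u_0\in L^1(\mathbb{R}^d;1+|x|^{k+1})$, and let $u(x,t)=\int_{\mathbb{R}^d}G(x-y,t)u_0(y)\,dy$ be the solution of the heat equation $u_t=\Delta u$ on $\mathbb{R}^d\times(0,\infty)$ with $u(\cdot,0)=u_0$. Then for all $x\in\mathbb{R}^d$ and $t>0$, $$\Big|u(x,t)-\pi^{-d/2}e^{-\frac{|x|^2}{4t}}\sum_{|\alpha|\le k}\frac{\int y^\alpha u_0(y)\,dy}{\alpha!}(4t)^{-\frac{|\alpha|+d}{2}}\prod_{i=1}^d H_{\alpha_i}\Big(\frac{x_i}{2\sqrt t}\Big)\Big| \le (2\pi)^{-\frac d2}(2t)^{-\frac{k+d+1}{2}}\sum_{|\alpha|=k+1}\frac{\|y^\alpha u_0(y)\|_{L^1}}{\sqrt{\alpha!}}\Big(\prod_{i=1}^d(\alpha_i+1)\Big)^{-\frac1{12}}.$$ The sum subtracted on the left equals $u_k(x,t):=\sum_{|\alpha|\le k}\frac{(-1)^{|\alpha|}}{\alpha!}\big(\int y^\alpha u_0(y)\,dy\big)D^\alpha G(x,t)$.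
   Context: $G(x,t)=(4\pi t)^{-d/2}\exp(-|x|^2/(4t))$ is the heat kernel. $H_n(x)=(-1)^ne^{x^2}\frac{d^n}{dx^n}e^{-x^2}$ are the physicists' Hermite polynomials. $L^1(\mathbb{R}^d;1+|x|^{m})$ denotes the set of measurable functions $f$ with $\int|f(x)|(1+|x|^m)\,dx<\infty$. Multi-index notation: $\alpha=(\alpha_1,\dots,\alpha_d)\in\mathbb{Z}_{\ge0}^d$, $|\alpha|=\sum\alpha_i$, $\alpha!=\prod\alpha_i!$, $y^\alpha=\prod y_i^{\alpha_i}$, $D^\alpha=\partial_{x_1}^{\alpha_1}\cdots\partial_{x_d}^{\alpha_d}$. *)

theory Defs
  imports "HOL-Analysis.Analysis"
begin

definition heat_kernel :: "real^'n \<Rightarrow> real \<Rightarrow> real" where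
  "heat_kernel x t = (4 * pi * t) powr (- (real CARD('n) / 2)) * exp (- (norm x ^ 2) / (4 * t))"

definition hermite :: "nat \<Rightarrow> real \<Rightarrow> real" where
  "hermite n x = (-1) ^ n * exp (x ^ 2) * (deriv ^^ n) (\<lambda>y. exp (- (y ^ 2))) x"

definition mi_abs :: "('n::finite \<Rightarrow> nat) \<Rightarrow> nat" where
  "mi_abs \<alpha> = (\<Sum>i\<in>UNIV. \<alpha> i)"

definition mi_fact :: "('n::finite \<Rightarrow> nat) \<Rightarrow> real" where
  "mi_fact \<alpha> = (\<Prod>i\<in>UNIV. fact (\<alpha> i))"

definition mi_pow :: "real^'n \<Rightarrow> ('n \<Rightarrow> nat) \<Rightarrow> real" where
  "mi_pow y \<alpha> = (\<Prod>i\<in>UNIV. (y $ i) ^ (\<alpha> i))"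

definition heat_solution :: "(real^'n \<Rightarrow> real) \<Rightarrow> real^'n \<Rightarrow> real \<Rightarrow> real" where
  "heat_solution u0 x t = (\<integral>y. heat_kernel (x - y) t * u0 y \<partial>lebesgue)"

end

theory Submission
  imports Defs
begin


definition phi :: "nat \<Rightarrow> real \<Rightarrow> real" where
  "phi n = (deriv ^^ n) (\<lambda>y. exp (- (y ^ 2)))"

lemma phi_Suc: "phi (Suc n) = deriv (phi n)"
  by (simp add: phi_def)

lemma phi0: "phi 0 = (\<lambda>y. exp (- (y ^ 2)))" by (simp add: phi_def)

lemma d_phi0: "(phi 0 has_real_derivative (-2*z*exp(-(z^2)))) (at z)"
  unfolding phi0 by (auto intro!: derivative_eq_intros)

lemma phi1: "phi 1 = (\<lambda>z. -2*z*exp(-(z^2)))"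
  using d_phi0 by (auto simp: phi_Suc[of 0, simplified] intro!: ext DERIV_imp_deriv)

lemma d_phi1: "(phi 1 has_real_derivative ((4*z^2-2)*exp(-(z^2)))) (at z)"
  unfolding phi1 by (auto intro!: derivative_eq_intros simp: algebra_simps power2_eq_square)

lemma phi2: "phi 2 = (\<lambda>z. (4*z^2-2)*exp(-(z^2)))"
  using d_phi1 by (auto simp: phi_Suc[of 1, simplified] numeral_2_eq_2 intro!: ext DERIV_imp_deriv)

lemma phi_all: "(\<forall>z. (phi n has_real_derivative phi (Suc n) z) (at z)) \<and>
   (\<forall>z. (phi (Suc n) has_real_derivative phi (Suc (Suc n)) z) (at z)) \<and>
   (\<forall>z. phi (Suc (Suc n)) z = -2*z*phi (Suc n) z - 2*(n+1)*phi n z)"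
proof (induction n)
  case 0
  show ?case using d_phi0 d_phi1 phi1 phi2
    by (auto simp: phi0 numeral_2_eq_2 algebra_simps power2_eq_square)
next
  case (Suc n)
  then have D1: "\<And>z. (phi (Suc n) has_real_derivative phi (Suc (Suc n)) z) (at z)"
    and D0: "\<And>z. (phi n has_real_derivative phi (Suc n) z) (at z)"
    and R: "\<And>z. phi (Suc (Suc n)) z = -2*z*phi (Suc n) z - 2*(n+1)*phi n z" by auto
  have E: "phi (Suc (Suc n)) = (\<lambda>z. -2*z*phi (Suc n) z - 2*(n+1)*phi n z)" using R by auto
  have D2: "(phi (Suc (Suc n)) has_real_derivative
      (-2*phi (Suc n) z - 2*z*phi (Suc (Suc n)) z - 2*(n+1)*phi (Suc n) z)) (at z)" for z
  proof -
    have "((\<lambda>z. -2*z*phi (Suc n) z - 2*(n+1)*phi n z) has_real_derivative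
      (-2*phi (Suc n) z - 2*z*phi (Suc (Suc n)) z - 2*(n+1)*phi (Suc n) z)) (at z)"
      by (rule derivative_eq_intros D1 D0 refl)+ (simp add: algebra_simps)
    then show ?thesis using E by simp
  qed
  have P3: "phi (Suc (Suc (Suc n))) z = -2*phi (Suc n) z - 2*z*phi (Suc (Suc n)) z - 2*(n+1)*phi (Suc n) z" for z
    using D2[of z] by (simp add: phi_Suc[of "Suc (Suc n)"] DERIV_imp_deriv)
  have R3: "phi (Suc (Suc (Suc n))) z = -2*z*phi (Suc (Suc n)) z - 2*(real (Suc n)+1)*phi (Suc n) z" for z
    unfolding P3 by (simp add: algebra_simps)
  have D3: "(phi (Suc (Suc n)) has_real_derivative phi (Suc (Suc (Suc n))) z) (at z)" for z
    using D2[of z] unfolding P3[of z, symmetric] .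
  show ?case using D1 D3 R3 by blast
qed

lemma phi_deriv: "(phi n has_real_derivative phi (Suc n) z) (at z)"
  using phi_all by blast

lemma phi_rec: "phi (Suc (Suc n)) z = -2*z*phi (Suc n) z - 2*(n+1)*phi n z"
  using phi_all by blast



lemma energy_deriv:
  fixes n :: nat
  defines "E \<equiv> \<lambda>z. phi n z * phi n z + phi (Suc n) z * phi (Suc n) z / (2*real n+2)"
  shows "(E has_real_derivative (-4*z*(phi (Suc n) z * phi (Suc n) z)/(2*real n+2))) (at z)"
proof -
  have "(E has_real_derivative (phi (Suc n) z * phi n z + phi (Suc n) z * phi n z +
       (phi (Suc (Suc n)) z * phi (Suc n) z + phi (Suc (Suc n)) z * phi (Suc n) z)/(2*real n+2))) (at z)"
    unfolding E_def
    by (intro DERIV_add DERIV_mult DERIV_cdivide phi_deriv)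
  moreover have "phi (Suc n) z * phi n z + phi (Suc n) z * phi n z +
       (phi (Suc (Suc n)) z * phi (Suc n) z + phi (Suc (Suc n)) z * phi (Suc n) z)/(2*real n+2)
      = -4*z*(phi (Suc n) z * phi (Suc n) z)/(2*real n+2)"
    unfolding phi_rec by (simp add: field_simps)
  ultimately show ?thesis by simp
qed

lemma energy_le: "(phi n z)^2 \<le> (phi n 0)^2 + (phi (Suc n) 0)^2 / (2*real n+2)"
proof -
  define E where "E \<equiv> \<lambda>z. phi n z * phi n z + phi (Suc n) z * phi (Suc n) z / (2*real n+2)"
  have D: "\<And>z. (E has_real_derivative (-4*z*(phi (Suc n) z * phi (Suc n) z)/(2*real n+2))) (at z)"
    unfolding E_def by (rule energy_deriv)
  have "E z \<le> E 0"
  proof (cases "z \<ge> 0")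
    case True
    show ?thesis
    proof (rule DERIV_nonpos_imp_nonincreasing[OF True])
      fix x :: real assume "0 \<le> x" "x \<le> z"
      then show "\<exists>y. DERIV E x :> y \<and> y \<le> 0"
        by (intro exI[of _ "-4*x*(phi (Suc n) x * phi (Suc n) x)/(2*real n+2)"] conjI D)
           (auto intro!: divide_nonpos_pos mult_nonpos_nonneg)
    qed
  next
    case False
    show ?thesis
    proof (rule DERIV_nonneg_imp_nondecreasing[of z 0])
      show "z \<le> 0" using False by simp
      fix x :: real assume "z \<le> x" "x \<le> 0"
      then have "x*(phi (Suc n) x * phi (Suc n) x) \<le> 0" by (intro mult_nonpos_nonneg) auto
      then show "\<exists>y. DERIV E x :> y \<and> y \<ge> 0"
        by (intro exI[of _ "-4*x*(phi (Suc n) x * phi (Suc n) x)/(2*real n+2)"] conjI D)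
           (auto simp: divide_nonpos_pos)
    qed
  qed
  moreover have "(phi n z)^2 \<le> E z" unfolding E_def by (simp add: power2_eq_square)
  ultimately show ?thesis unfolding E_def power2_eq_square by linarith
qed

lemma phi_odd0: "phi (2*m+1) 0 = 0"
proof (induction m)
  case 0 show ?case using phi1 by simp
next
  case (Suc m)
  have "phi (2*Suc m+1) 0 = phi (Suc (Suc (2*m+1))) 0" by simp
  also have "\<dots> = 0" unfolding phi_rec using Suc by simp
  finally show ?case .
qed

lemma phi_even0: "(phi (2*m+2) 0)^2 = (4*real m+2)^2 * (phi (2*m) 0)^2"
proof -
  have "phi (2*m+2) 0 = phi (Suc (Suc (2*m))) 0" by simp
  also have "\<dots> = -(4*real m+2) * phi (2*m) 0" unfolding phi_rec by (simp add: algebra_simps)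
  finally have "(phi (2*m+2) 0)^2 = (-(4*real m+2))^2 * (phi (2*m) 0)^2" by (simp only: power_mult_distrib)
  then show ?thesis by (simp only: power2_minus)
qed

lemma ineq_aux: "(2*real m+1)^5*(2*real m+3) \<le> (2*real m+2)^6"
proof -
  define u where "u = 2*real m+2"
  have u: "u \<ge> 1" unfolding u_def by simp
  have a: "2*real m+1 = u - 1" "2*real m+3 = u+1" unfolding u_def by simp_all
  have "(2*real m+1)^5*(2*real m+3) = (u-1)^4 * ((u-1)*(u+1))" unfolding a by (simp add: eval_nat_numeral)
  also have "\<dots> \<le> u^4 * u^2"
  proof (rule mult_mono)
    show "(u-1)^4 \<le> u^4" using u by (intro power_mono) auto
    show "(u-1)*(u+1) \<le> u^2" by (simp add: power2_eq_square algebra_simps)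
  qed (use u in auto)
  also have "\<dots> = (2*real m+2)^6" unfolding u_def by (simp flip: power_add)
  finally show ?thesis .
qed

lemma phi_even_bound: "((phi (2*m) 0)^2)^6 * (2*real m+1) \<le> (2^(2*m) * fact (2*m))^6"
proof (induction m)
  case 0 show ?case by (simp add: phi0)
next
  case (Suc m)
  define A where "A = ((phi (2*m) 0)^2)^6"
  define R where "R = (2^(2*m) * fact (2*m) :: real)^6"
  define p where "p = 2*real m+1"
  have IH: "p * A \<le> R" using Suc unfolding A_def R_def p_def by (simp add: mult.commute)
  have A0: "A \<ge> 0" unfolding A_def by simp
  have p0: "p \<ge> 1" unfolding p_def by simp
  have e1: "((phi (2*Suc m) 0)^2)^6 = 4^6 * p^12 * A"
  proof -
    have "((phi (2*Suc m) 0)^2)^6 = ((4*real m+2)^2)^6 * A"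
      using phi_even0[of m] unfolding A_def by (simp add: power_mult_distrib)
    also have "(4*real m+2) = 2*p" unfolding p_def by simp
    finally show ?thesis by (simp add: power_mult_distrib flip: power_mult)
  qed
  have e2: "(2^(2*Suc m) * fact (2*Suc m) :: real)^6 = 4^6 * p^6 * (p+1)^6 * R"
  proof -
    have "fact (2*Suc m) = (p+1) * p * (fact (2*m) :: real)"
      unfolding p_def by (simp add: fact_Suc algebra_simps)
    moreover have "(2::real)^(2*Suc m) = 4 * 2^(2*m)" by (simp add: power_mult)
    ultimately have "(2^(2*Suc m) * fact (2*Suc m) :: real) = (4*p*(p+1)) * (2^(2*m) * fact (2*m))"
      by simp
    then show ?thesis unfolding R_def by (simp only: power_mult_distrib)
  qed
  have "4^6 * p^12 * A * (2*real (Suc m)+1) = 4^6 * p^12 * A * (p+2)"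
    unfolding p_def by simp
  also have "\<dots> = 4^6 * (p^6 * p^5 * p) * A * (p+2)" by (simp flip: power_add power_Suc2)
  also have "\<dots> = 4^6 * p^6 * (p^5 * (p+2)) * (p * A)" by (simp only: mult_ac)
  also have "\<dots> \<le> 4^6 * p^6 * (p+1)^6 * R"
  proof -
    have e: "p+2 = 2*real m+3" "p+1 = 2*real m+2" unfolding p_def by simp_all
    have "p^5 * (p+2) \<le> (p+1)^6" unfolding e using ineq_aux[of m] unfolding p_def .
    then have X: "(p^5 * (p+2)) * (p * A) \<le> (p+1)^6 * R"
      using IH A0 p0 by (intro mult_mono) auto
    have "4^6 * p^6 * (p^5 * (p+2)) * (p * A) = (4^6 * p^6) * ((p^5 * (p+2)) * (p * A))" by (simp only: mult.assoc)
    also have "\<dots> \<le> (4^6 * p^6) * ((p+1)^6 * R)" by (rule mult_left_mono[OF X]) simp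
    also have "\<dots> = 4^6 * p^6 * (p+1)^6 * R" by (simp only: mult.assoc)
    finally show ?thesis .
  qed
  finally show ?case unfolding e1 e2 by simp
qed

lemma root6_le:
  fixes x y c :: real
  assumes x0: "x \<ge> 0" and y0: "y \<ge> 0" and c1: "c \<ge> 1" and h: "x^6 * c \<le> y^6"
  shows "x \<le> y * c powr (-1/6)"
proof -
  define w where "w = c powr (-1/6)"
  have w0: "w \<ge> 0" unfolding w_def by simp
  have "w^6 = (c powr (-1/6)) powr 6" unfolding w_def using c1 by (simp add: powr_realpow)
  also have "\<dots> = c powr (-1)" by (simp add: powr_powr)
  also have "\<dots> = 1/c" using c1 by (simp add: powr_minus divide_inverse)
  finally have w6: "w^6 = 1/c" .
  have "x^6 \<le> y^6 / c" using h c1 by (simp add: pos_le_divide_eq)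
  also have "\<dots> = (y*w)^6" by (simp add: power_mult_distrib w6)
  finally have "x^6 \<le> (y*w)^6" .
  then have "x \<le> y*w" using power_mono_iff[of x "y*w" 6] x0 y0 w0 by simp
  then show ?thesis unfolding w_def .
qed

lemma E0_bound: "((phi n 0)^2 + (phi (Suc n) 0)^2 / (2*real n+2))^6 * (real n+1) \<le> (2^n * fact n)^6"
proof (cases "even n")
  case True
  then obtain m where n: "n = 2*m" by blast
  have z: "phi (Suc n) 0 = 0" using phi_odd0[of m] n by simp
  have "((phi n 0)^2 + (phi (Suc n) 0)^2 / (2*real n+2))^6 * (real n+1) = ((phi (2*m) 0)^2)^6 * (2*real m+1)"
    unfolding z using n by simp
  also have "\<dots> \<le> (2^(2*m) * fact (2*m))^6" by (rule phi_even_bound)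
  finally show ?thesis using n by simp
next
  case False
  then obtain m where n: "n = 2*m+1" using oddE by blast
  have z: "phi n 0 = 0" using phi_odd0[of m] n by simp
  define A where "A = (phi (2*(m+1)) 0)^2"
  define q where "q = 2*(2*real m+2)"
  have q0: "q > 0" unfolding q_def by simp
  have E0: "(phi n 0)^2 + (phi (Suc n) 0)^2 / (2*real n+2) = A / q"
  proof -
    have "Suc n = 2*(m+1)" using n by simp
    moreover have "2*real n+2 = q" unfolding q_def n by simp
    ultimately show ?thesis unfolding z A_def by simp
  qed
  have A0: "A \<ge> 0" unfolding A_def by simp
  have B: "A^6 * (2*real (m+1)+1) \<le> (2^(2*(m+1)) * fact (2*(m+1)))^6"
    using phi_even_bound[of "m+1"] unfolding A_def .
  have f: "(2^(2*(m+1)) * fact (2*(m+1)) :: real) = q * (2^n * fact n)"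
  proof -
    have "fact (2*(m+1)) = (2*real m+2) * (fact n :: real)" unfolding n
      by (simp add: fact_Suc)
    moreover have "(2::real)^(2*(m+1)) = 2 * 2^n" unfolding n by simp
    ultimately show ?thesis unfolding q_def by simp
  qed
  have "(A/q)^6 * (real n+1) \<le> (A/q)^6 * (2*real (m+1)+1)" using n by (intro mult_left_mono) auto
  also have "\<dots> = A^6 * (2*real (m+1)+1) / q^6"
    by (simp add: power_divide)
  also have "\<dots> \<le> (q * (2^n * fact n))^6 / q^6"
    using B unfolding f by (intro divide_right_mono) auto
  also have "\<dots> = (2^n * fact n)^6" using q0 by (simp add: power_mult_distrib)
  finally show ?thesis unfolding E0 .
qed

lemma phi_sq_bound: "(phi n z)^2 \<le> 2^n * fact n * (real n+1) powr (-1/6)"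
proof -
  define E0 where "E0 = (phi n 0)^2 + (phi (Suc n) 0)^2 / (2*real n+2)"
  have "E0^6 * (real n+1) \<le> (2^n * fact n)^6" unfolding E0_def by (rule E0_bound)
  then have "E0 \<le> 2^n * fact n * (real n+1) powr (-1/6)"
    by (intro root6_le) (auto simp: E0_def)
  moreover have "(phi n z)^2 \<le> E0" unfolding E0_def by (rule energy_le)
  ultimately show ?thesis by linarith
qed

lemma phi_abs_bound: "\<bar>phi n z\<bar> \<le> sqrt (2^n * fact n) * (real n+1) powr (-1/12)"
proof -
  have "\<bar>phi n z\<bar> = sqrt ((phi n z)^2)" by simp
  also have "\<dots> \<le> sqrt (2^n * fact n * (real n+1) powr (-1/6))"
    using phi_sq_bound by (rule real_sqrt_le_mono)
  also have "\<dots> = sqrt (2^n * fact n) * (real n+1) powr (-1/12)"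
  proof -
    have "sqrt ((real n+1) powr (-1/6)) = (real n+1) powr (-1/12)"
      using powr_half_sqrt_powr[of "real n+1" "-1/6"] by simp
    then show ?thesis by (simp add: real_sqrt_mult)
  qed
  finally show ?thesis .
qed



definition MIS :: "'a set \<Rightarrow> (nat \<Rightarrow> bool) \<Rightarrow> ('a \<Rightarrow> nat) set" where
  "MIS I Q = {\<alpha>. (\<forall>i. i \<notin> I \<longrightarrow> \<alpha> i = 0) \<and> Q (sum \<alpha> I)}"

lemma finite_MIS:
  assumes "finite I" "\<And>v. Q v \<Longrightarrow> v \<le> N"
  shows "finite (MIS I Q)"
proof -
  have "MIS I Q \<subseteq> {f. \<forall>x. (x \<in> I \<longrightarrow> f x \<in> {..N}) \<and> (x \<notin> I \<longrightarrow> f x = 0)}"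
  proof
    fix \<alpha> assume a: "\<alpha> \<in> MIS I Q"
    then have "sum \<alpha> I \<le> N" using assms(2) unfolding MIS_def by auto
    moreover have "\<alpha> x \<le> sum \<alpha> I" if "x \<in> I" for x using that assms(1) by (intro member_le_sum) auto
    ultimately show "\<alpha> \<in> {f. \<forall>x. (x \<in> I \<longrightarrow> f x \<in> {..N}) \<and> (x \<notin> I \<longrightarrow> f x = 0)}"
      using a unfolding MIS_def by force
  qed
  moreover have "finite {f. \<forall>x. (x \<in> I \<longrightarrow> f x \<in> {..N}) \<and> (x \<notin> I \<longrightarrow> f x = (0::nat))}"
    using assms(1) by (intro finite_set_of_finite_funs) auto
  ultimately show ?thesis by (rule finite_subset)
qed

lemma sum_upd_insert:
  assumes "finite J" "j \<notin> J" "\<forall>i. i \<notin> J \<longrightarrow> \<beta> i = 0"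
  shows "sum (\<beta>(j:=a)) (insert j J) = a + sum \<beta> J"
proof -
  have "sum (\<beta>(j:=a)) J = sum \<beta> J" using assms(2) by (intro sum.cong) auto
  then show ?thesis using assms by simp
qed

lemma sum_split_insert:
  assumes "finite J" "j \<notin> J"
  shows "sum \<alpha> (insert j J) = \<alpha> j + sum (\<alpha>(j:=0)) J"
proof -
  have "sum (\<alpha>(j:=0)) J = sum \<alpha> J" using assms(2) by (intro sum.cong) auto
  then show ?thesis using assms by simp
qed

lemma MIS_split:
  fixes h :: "('a \<Rightarrow> nat) \<Rightarrow> real"
  assumes J: "finite J" "j \<notin> J" and QN: "\<And>v. Q v \<Longrightarrow> v \<le> N"
  shows "(\<Sum>\<alpha>\<in>MIS (insert j J) Q. h \<alpha>) = (\<Sum>a\<le>N. \<Sum>\<beta>\<in>MIS J (\<lambda>s. Q (a+s)). h (\<beta>(j:=a)))"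
proof -
  have fin: "finite (MIS J (\<lambda>s. Q (a+s)))" for a
  proof (rule finite_MIS[OF J(1), of _ N])
    fix v assume "Q (a+v)" then show "v \<le> N" using QN[of "a+v"] by simp
  qed
  have "(\<Sum>a\<le>N. \<Sum>\<beta>\<in>MIS J (\<lambda>s. Q (a+s)). h (\<beta>(j:=a)))
      = (\<Sum>p\<in>Sigma {..N} (\<lambda>a. MIS J (\<lambda>s. Q (a+s))). h ((snd p)(j:=fst p)))"
    by (subst sum.Sigma) (auto simp: fin split_beta)
  also have "\<dots> = (\<Sum>\<alpha>\<in>MIS (insert j J) Q. h \<alpha>)"
  proof (rule sum.reindex_bij_witness[where i="\<lambda>\<alpha>. (\<alpha> j, \<alpha>(j:=0))" and j="\<lambda>p. (snd p)(j:=fst p)"])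
    fix p assume p: "p \<in> Sigma {..N} (\<lambda>a. MIS J (\<lambda>s. Q (a+s)))"
    then have b: "\<forall>i. i \<notin> J \<longrightarrow> snd p i = 0" "Q (fst p + sum (snd p) J)"
      unfolding MIS_def by auto
    show "(((snd p)(j:=fst p)) j, ((snd p)(j:=fst p))(j:=0)) = p"
      using b J by (cases p) (auto intro!: ext)
    have su: "sum ((snd p)(j:=fst p)) (insert j J) = fst p + sum (snd p) J"
      using J b(1) by (rule sum_upd_insert)
    have A1: "\<forall>i. i \<notin> insert j J \<longrightarrow> ((snd p)(j:=fst p)) i = 0" using b(1) by auto
    show "(snd p)(j:=fst p) \<in> MIS (insert j J) Q"
      unfolding MIS_def mem_Collect_eq su using A1 b(2) by blast
  next
    fix \<alpha> assume a: "\<alpha> \<in> MIS (insert j J) Q"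
    then have b: "\<forall>i. i \<notin> insert j J \<longrightarrow> \<alpha> i = 0" "Q (sum \<alpha> (insert j J))"
      unfolding MIS_def by auto
    show "(snd (\<alpha> j, \<alpha>(j:=0)))(j:=fst (\<alpha> j, \<alpha>(j:=0))) = \<alpha>" by auto
    have s: "sum \<alpha> (insert j J) = \<alpha> j + sum (\<alpha>(j:=0)) J" using J by (rule sum_split_insert)
    show "(\<alpha> j, \<alpha>(j:=0)) \<in> Sigma {..N} (\<lambda>a. MIS J (\<lambda>s. Q (a+s)))"
      using b QN[of "sum \<alpha> (insert j J)"] unfolding MIS_def s by auto
  qed auto
  finally show ?thesis by simp
qed

lemma MIS_empty: "MIS {} Q = (if Q 0 then {\<lambda>_. 0} else {})"
  unfolding MIS_def by (auto intro!: ext)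

lemma taylor1:
  fixes F :: "nat \<Rightarrow> real \<Rightarrow> real"
  assumes D: "\<And>j s. (F j has_real_derivative F (Suc j) s) (at s)"
    and Bd: "\<And>j s. \<bar>F j s\<bar> \<le> B j"
  shows "\<bar>F 0 (a+b) - (\<Sum>m\<le>k. b^m / fact m * F m a)\<bar> \<le> \<bar>b\<bar>^(k+1) / fact (k+1) * B (k+1)"
proof -
  have DD: "\<forall>m x. ((\<lambda>s. F m (a+s)) has_real_derivative F (Suc m) (a+x)) (at x)"
  proof (intro allI)
    fix m x
    have "((\<lambda>s. F m (a+s)) has_real_derivative F (Suc m) (a+x) * 1) (at x)"
      by (rule DERIV_chain2[OF D]) (auto intro!: derivative_eq_intros)
    then show "((\<lambda>s. F m (a+s)) has_real_derivative F (Suc m) (a+x)) (at x)" by simp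
  qed
  obtain t where "F 0 (a+b) = (\<Sum>m<Suc k. (F m (a+0) / fact m) * b ^ m) + (F (Suc k) (a+t) / fact (Suc k)) * b ^ (Suc k)"
    using Maclaurin_all_le[of "\<lambda>m s. F m (a+s)" "\<lambda>s. F 0 (a+s)" b "Suc k"]
    using DD by blast
  then have "F 0 (a+b) - (\<Sum>m\<le>k. b^m / fact m * F m a) = (F (Suc k) (a+t) / fact (Suc k)) * b ^ (Suc k)"
    by (simp add: lessThan_Suc_atMost mult.commute)
  also have "\<bar>\<dots>\<bar> \<le> \<bar>b\<bar>^(k+1) / fact (k+1) * B (k+1)"
  proof -
    have "\<bar>(F (Suc k) (a+t) / fact (Suc k)) * b ^ (Suc k)\<bar> = \<bar>F (Suc k) (a+t)\<bar> * (\<bar>b\<bar>^(k+1) / fact (k+1))"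
      by (simp add: abs_mult power_abs)
    also have "\<dots> \<le> B (k+1) * (\<bar>b\<bar>^(k+1) / fact (k+1))"
      using Bd[of "Suc k" "a+t"] by (intro mult_right_mono) auto
    finally show ?thesis by (simp add: mult.commute)
  qed
  finally show ?thesis .
qed

lemma MIS_zero:
  assumes "finite J"
  shows "MIS J (\<lambda>v. v = 0) = {\<lambda>_. 0}"
  using assms unfolding MIS_def by (auto intro!: ext simp: sum_eq_0_iff)

lemma MIS_cong:
  assumes "\<And>v. Q v \<longleftrightarrow> Q' v"
  shows "MIS J Q = MIS J Q'"
  using assms unfolding MIS_def by auto

lemma prod_upd_insert:
  assumes "finite J" "j \<notin> J"
  shows "(\<Prod>i\<in>insert j J. G i ((\<beta>(j:=a)) i)) = G j a * (\<Prod>i\<in>J. G i (\<beta> i))"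
proof -
  have "(\<Prod>i\<in>J. G i ((\<beta>(j:=a)) i)) = (\<Prod>i\<in>J. G i (\<beta> i))"
    using assms(2) by (intro prod.cong) auto
  then show ?thesis using assms by simp
qed

lemma taylor_prod:
  fixes F :: "'a \<Rightarrow> nat \<Rightarrow> real \<Rightarrow> real" and B :: "'a \<Rightarrow> nat \<Rightarrow> real"
  assumes D: "\<And>i j s. (F i j has_real_derivative F i (Suc j) s) (at s)"
    and Bd: "\<And>i j s. \<bar>F i j s\<bar> \<le> B i j"
    and fin: "finite I"
  shows "\<bar>(\<Prod>i\<in>I. F i 0 (a i + b i)) -
     (\<Sum>\<alpha>\<in>MIS I (\<lambda>v. v \<le> k). \<Prod>i\<in>I. b i ^ \<alpha> i / fact (\<alpha> i) * F i (\<alpha> i) (a i))\<bar>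
   \<le> (\<Sum>\<alpha>\<in>MIS I (\<lambda>v. v = k+1). \<Prod>i\<in>I. \<bar>b i\<bar> ^ \<alpha> i / fact (\<alpha> i) * B i (\<alpha> i))"
  using fin
proof (induction I arbitrary: k rule: finite_induct)
  case empty
  show ?case by (simp add: MIS_empty)
next
  case (insert j J)
  have B0: "B i m \<ge> 0" for i m using Bd[of i m 0] by linarith
  define tm where "tm = (\<lambda>i m. b i ^ m / fact m * F i m (a i))"
  define bt where "bt = (\<lambda>i m. \<bar>b i\<bar> ^ m / fact m * B i m)"
  define T where "T = (\<lambda>k. \<Sum>\<alpha>\<in>MIS J (\<lambda>v. v \<le> k). \<Prod>i\<in>J. tm i (\<alpha> i))"
  define R where "R = (\<lambda>n. \<Sum>\<alpha>\<in>MIS J (\<lambda>v. v = n). \<Prod>i\<in>J. bt i (\<alpha> i))"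
  define f where "f = F j 0 (a j + b j)"
  define g where "g = (\<Prod>i\<in>J. F i 0 (a i + b i))"
  have IH: "\<bar>g - T k'\<bar> \<le> R (k'+1)" for k'
    using insert.IH[of k'] unfolding g_def T_def R_def tm_def bt_def .
  have tmb: "\<bar>tm j m\<bar> \<le> bt j m" for m
    unfolding tm_def bt_def using Bd[of j m "a j"]
    by (auto simp: abs_mult power_abs intro!: mult_left_mono divide_right_mono)
  have bt0: "bt j m \<ge> 0" for m unfolding bt_def using B0 by simp
  have R0: "R 0 = (\<Prod>i\<in>J. B i 0)" unfolding R_def bt_def using insert.hyps(1) by (simp add: MIS_zero)
  have gb: "\<bar>g\<bar> \<le> (\<Prod>i\<in>J. B i 0)"
    unfolding g_def abs_prod by (intro prod_mono) (use Bd in auto)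
  have Ts: "(\<Sum>\<alpha>\<in>MIS (insert j J) (\<lambda>v. v \<le> k). \<Prod>i\<in>insert j J. tm i (\<alpha> i)) = (\<Sum>m\<le>k. tm j m * T (k-m))"
  proof -
    have "(\<Sum>\<alpha>\<in>MIS (insert j J) (\<lambda>v. v \<le> k). \<Prod>i\<in>insert j J. tm i (\<alpha> i))
      = (\<Sum>m\<le>k. \<Sum>\<beta>\<in>MIS J (\<lambda>s. m+s \<le> k). \<Prod>i\<in>insert j J. tm i ((\<beta>(j:=m)) i))"
      using insert.hyps by (intro MIS_split) auto
    also have "\<dots> = (\<Sum>m\<le>k. tm j m * T (k-m))"
    proof (rule sum.cong[OF refl])
      fix m assume m: "m \<in> {..k}"
      have "MIS J (\<lambda>s. m+s \<le> k) = MIS J (\<lambda>v. v \<le> k-m)" using m by (intro MIS_cong) auto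
      then show "(\<Sum>\<beta>\<in>MIS J (\<lambda>s. m+s \<le> k). \<Prod>i\<in>insert j J. tm i ((\<beta>(j:=m)) i)) = tm j m * T (k-m)"
        unfolding T_def prod_upd_insert[OF insert.hyps] sum_distrib_left by simp
    qed
    finally show ?thesis .
  qed
  have Rs: "(\<Sum>\<alpha>\<in>MIS (insert j J) (\<lambda>v. v = k+1). \<Prod>i\<in>insert j J. bt i (\<alpha> i)) = (\<Sum>m\<le>k+1. bt j m * R (k+1-m))"
  proof -
    have "(\<Sum>\<alpha>\<in>MIS (insert j J) (\<lambda>v. v = k+1). \<Prod>i\<in>insert j J. bt i (\<alpha> i))
      = (\<Sum>m\<le>k+1. \<Sum>\<beta>\<in>MIS J (\<lambda>s. m+s = k+1). \<Prod>i\<in>insert j J. bt i ((\<beta>(j:=m)) i))"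
      using insert.hyps by (intro MIS_split) auto
    also have "\<dots> = (\<Sum>m\<le>k+1. bt j m * R (k+1-m))"
    proof (rule sum.cong[OF refl])
      fix m assume m: "m \<in> {..k+1}"
      have "MIS J (\<lambda>s. m+s = k+1) = MIS J (\<lambda>v. v = k+1-m)" using m by (intro MIS_cong) auto
      then show "(\<Sum>\<beta>\<in>MIS J (\<lambda>s. m+s = k+1). \<Prod>i\<in>insert j J. bt i ((\<beta>(j:=m)) i)) = bt j m * R (k+1-m)"
        unfolding R_def prod_upd_insert[OF insert.hyps] sum_distrib_left by simp
    qed
    finally show ?thesis .
  qed
  have t1: "\<bar>f - (\<Sum>m\<le>k. tm j m)\<bar> \<le> bt j (k+1)"
    unfolding f_def tm_def bt_def by (rule taylor1) (use D Bd in auto)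
  have "(\<Prod>i\<in>insert j J. F i 0 (a i + b i)) - (\<Sum>m\<le>k. tm j m * T (k-m))
      = (f - (\<Sum>m\<le>k. tm j m)) * g + (\<Sum>m\<le>k. tm j m * (g - T (k-m)))"
    using insert.hyps unfolding f_def g_def
    by (simp add: algebra_simps sum_subtractf sum_distrib_left sum_distrib_right)
  also have "\<bar>\<dots>\<bar> \<le> \<bar>f - (\<Sum>m\<le>k. tm j m)\<bar> * \<bar>g\<bar> + (\<Sum>m\<le>k. \<bar>tm j m\<bar> * \<bar>g - T (k-m)\<bar>)"
    by (rule order_trans[OF abs_triangle_ineq]) (auto simp: abs_mult intro!: order_trans[OF sum_abs] sum_mono)
  also have "\<dots> \<le> bt j (k+1) * (\<Prod>i\<in>J. B i 0) + (\<Sum>m\<le>k. bt j m * R (k-m+1))"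
    apply (intro add_mono mult_mono sum_mono)
    using t1 gb tmb IH bt0 by auto
  also have "\<dots> = (\<Sum>m\<le>k+1. bt j m * R (k+1-m))"
  proof -
    have "(\<Sum>m\<le>k. bt j m * R (k-m+1)) = (\<Sum>m\<le>k. bt j m * R (k+1-m))"
      by (intro sum.cong) (auto simp: Suc_diff_le)
    then show ?thesis using R0 by simp
  qed
  finally show ?case unfolding Ts[unfolded tm_def] Rs[unfolded bt_def] tm_def bt_def .
qed



definition Kc :: "real \<Rightarrow> real" where "Kc t = (4*pi*t) powr (-1/2)"
definition Fg :: "real \<Rightarrow> nat \<Rightarrow> real \<Rightarrow> real" where
  "Fg t m s = Kc t * (1/(2* sqrt t))^m * phi m (s/(2* sqrt t))"
definition Bg :: "real \<Rightarrow> nat \<Rightarrow> real" where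
  "Bg t m = Kc t * (1/(2* sqrt t))^m * sqrt (2^m * fact m) * (real m+1) powr (-1/12)"

lemma Fg_deriv:
  assumes t: "t > 0"
  shows "(Fg t m has_real_derivative Fg t (Suc m) s) (at s)"
proof -
  have "((\<lambda>s. phi m (s/(2* sqrt t))) has_real_derivative phi (Suc m) (s/(2* sqrt t)) * (1/(2* sqrt t))) (at s)"
    by (rule DERIV_chain2[OF phi_deriv]) (use DERIV_cdivide[OF DERIV_ident, of "2 * sqrt t" s] in simp)
  then have "(Fg t m has_real_derivative Kc t * (1/(2* sqrt t))^m * (phi (Suc m) (s/(2* sqrt t)) * (1/(2* sqrt t)))) (at s)"
    unfolding Fg_def by (intro DERIV_cmult)
  then show ?thesis unfolding Fg_def by (simp add: mult_ac)
qed

lemma Fg_bound: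
  assumes t: "t > 0"
  shows "\<bar>Fg t m s\<bar> \<le> Bg t m"
proof -
  have "\<bar>Fg t m s\<bar> = Kc t * (1/(2* sqrt t))^m * \<bar>phi m (s/(2* sqrt t))\<bar>"
    unfolding Fg_def Kc_def using t by (simp add: abs_mult)
  also have "\<dots> \<le> Kc t * (1/(2* sqrt t))^m * (sqrt (2^m * fact m) * (real m+1) powr (-1/12))"
    using t by (intro mult_left_mono phi_abs_bound) (auto simp: Kc_def)
  finally show ?thesis unfolding Bg_def by (simp add: mult_ac)
qed

lemma sq_c: "t > 0 \<Longrightarrow> (s/(2* sqrt t))^2 = s^2/(4*t)"
  by (simp add: power_divide power_mult_distrib)

lemma Fg0: "t > 0 \<Longrightarrow> Fg t 0 s = Kc t * exp (-(s^2)/(4*t))"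
  unfolding Fg_def phi0 by (simp add: sq_c)

lemma norm_sq_vec: "norm (z::real^'n)^2 = (\<Sum>i\<in>UNIV. (z $ i)^2)"
  unfolding norm_vec_def L2_set_def by (simp add: sum_nonneg)

lemma prod_exp_sq:
  fixes z :: "real^'n"
  shows "(\<Prod>i\<in>UNIV. exp (- ((z $ i)^2)/(4*t))) = exp (-(norm z^2)/(4*t))"
proof -
  have "(\<Prod>i\<in>UNIV. exp (- ((z $ i)^2)/(4*t))) = exp (\<Sum>i\<in>UNIV. - ((z $ i)^2)/(4*t))"
    by (simp add: exp_sum)
  also have "(\<Sum>i\<in>UNIV. - ((z $ i)^2)/(4*t)) = -(norm z^2)/(4*t)"
    unfolding norm_sq_vec by (simp add: sum_negf sum_divide_distrib)
  finally show ?thesis .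
qed

lemma prod_Kc: "t > 0 \<Longrightarrow> (\<Prod>i\<in>(UNIV::'n::finite set). Kc t) = (4*pi*t) powr (-(real CARD('n)/2))"
proof -
  assume t: "t > 0"
  have "(4*pi*t) powr (\<Sum>i\<in>(UNIV::'n set). -1/2) = (\<Prod>i\<in>(UNIV::'n set). (4*pi*t) powr (-1/2))"
    using t by (intro powr_sum) auto
  then show ?thesis unfolding Kc_def by simp
qed

lemma hk_prod:
  fixes z :: "real^'n"
  assumes t: "t > 0"
  shows "heat_kernel z t = (\<Prod>i\<in>UNIV. Fg t 0 (z $ i))"
proof -
  have "(\<Prod>i\<in>UNIV. Fg t 0 (z $ i)) = (\<Prod>i\<in>(UNIV::'n set). Kc t) * (\<Prod>i\<in>UNIV. exp (- ((z $ i)^2)/(4*t)))"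
    unfolding Fg0[OF t] by (simp add: prod.distrib)
  also have "\<dots> = (4*pi*t) powr (-(real CARD('n)/2)) * exp (-(norm z^2)/(4*t))"
    unfolding prod_exp_sq prod_Kc[OF t, where 'n='n] ..
  finally show ?thesis unfolding heat_kernel_def by simp
qed

lemma phi_hermite: "phi m z = (-1)^m * exp (-(z^2)) * hermite m z"
proof -
  have "hermite m z = (-1)^m * exp (z^2) * phi m z" unfolding hermite_def phi_def by simp
  then have "(-1)^m * exp (-(z^2)) * hermite m z = ((-1)^m * (-1)^m) * (exp (-(z^2)) * exp (z^2)) * phi m z"
    by (simp add: mult_ac)
  also have "\<dots> = phi m z" by (simp add: exp_minus field_simps)
  finally show ?thesis by simp
qed

lemma inv2sqrt: "t > 0 \<Longrightarrow> 1/(2* sqrt t) = (4*t) powr (-1/2)"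
proof -
  assume t: "t > 0"
  have "(4*t) powr (-1/2) = 1 / (4*t) powr (1/2)" by (simp add: powr_minus_divide)
  also have "(4*t) powr (1/2) = sqrt (4*t)" using t by (simp add: powr_half_sqrt)
  also have "sqrt (4*t) = 2* sqrt t" by (simp add: real_sqrt_mult)
  finally show ?thesis by simp
qed

lemma sqrt2inv: "t > 0 \<Longrightarrow> sqrt 2/(2* sqrt t) = (2*t) powr (-1/2)"
proof -
  assume t: "t > 0"
  have "(2*t) powr (-1/2) = 1 / (2*t) powr (1/2)" by (simp add: powr_minus_divide)
  also have "(2*t) powr (1/2) = sqrt (2*t)" using t by (simp add: powr_half_sqrt)
  also have "sqrt (2*t) = sqrt 2 * sqrt t" by (simp add: real_sqrt_mult)
  also have "1 / (sqrt 2 * sqrt t) = sqrt 2/(2 * sqrt t)"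
  proof -
    have "sqrt 2 * sqrt 2 = (2::real)" by simp
    then show ?thesis using t by (simp add: divide_simps)
  qed
  finally show ?thesis by simp
qed

lemma const1:
  assumes t: "t > 0"
  shows "Kc t * (1/(2* sqrt t))^m = pi powr (-1/2) * (4*t) powr (-(real m+1)/2)"
proof -
  have "Kc t = pi powr (-1/2) * (4*t) powr (-1/2)" unfolding Kc_def
    using t by (simp add: powr_mult[symmetric] mult_ac)
  moreover have "(1/(2* sqrt t))^m = (4*t) powr (-real m/2)"
    unfolding inv2sqrt[OF t] using t by (simp add: powr_realpow[symmetric] powr_powr)
  ultimately show ?thesis using t by (simp add: powr_add[symmetric] add_divide_distrib diff_divide_distrib algebra_simps)
qed

lemma const2:
  assumes t: "t > 0"
  shows "Kc t * (1/(2* sqrt t))^m * sqrt (2^m) = (2*pi) powr (-1/2) * (2*t) powr (-(real m+1)/2)"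
proof -
  have "Kc t = (2*pi) powr (-1/2) * (2*t) powr (-1/2)" unfolding Kc_def
    using t by (simp add: powr_mult[symmetric] mult_ac)
  moreover have "(1/(2* sqrt t))^m * sqrt (2^m) = (2*t) powr (-real m/2)"
  proof -
    have "(1/(2* sqrt t))^m * sqrt (2^m) = (sqrt 2/(2* sqrt t))^m"
      by (simp add: real_sqrt_power power_divide)
    also have "\<dots> = (2*t) powr (-real m/2)"
      unfolding sqrt2inv[OF t] using t by (simp add: powr_realpow[symmetric] powr_powr)
    finally show ?thesis .
  qed
  ultimately have "Kc t * (1/(2 * sqrt t))^m * sqrt (2^m) = (2*pi) powr (-1/2) * ((2*t) powr (-1/2) * (2*t) powr (-real m/2))"
    by (simp only: mult.assoc)
  also have "(2*t) powr (-1/2) * (2*t) powr (-real m/2) = (2*t) powr (-(real m+1)/2)"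
    by (simp add: powr_add[symmetric] add_divide_distrib diff_divide_distrib algebra_simps)
  finally show ?thesis .
qed



lemma sum_half:
  fixes \<alpha> :: "'n::finite \<Rightarrow> nat"
  shows "(\<Sum>i\<in>UNIV. -(real (\<alpha> i)+1)/2) = -((real (mi_abs \<alpha>) + real CARD('n))/2)"
proof -
  have "(\<Sum>i\<in>UNIV. -(real (\<alpha> i)+1)/2) = (\<Sum>i\<in>UNIV. (real (\<alpha> i)+1)) * (-1/2)"
    by (subst sum_distrib_right) (rule sum.cong, auto simp: field_simps)
  also have "(\<Sum>i\<in>UNIV. (real (\<alpha> i)+1)) = real (mi_abs \<alpha>) + real CARD('n)"
    unfolding mi_abs_def by (simp add: sum.distrib)
  finally show ?thesis by simp
qed

lemma prod_half_powr:
  fixes \<alpha> :: "'n::finite \<Rightarrow> nat"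
  assumes "b > 0" "c > 0"
  shows "(\<Prod>i\<in>UNIV. b powr (-1/2) * c powr (-(real (\<alpha> i)+1)/2))
       = b powr (-(real CARD('n)/2)) * c powr (-((real (mi_abs \<alpha>) + real CARD('n))/2))"
proof -
  have "(\<Prod>i\<in>(UNIV::'n set). b powr (-1/2)) = b powr (\<Sum>i\<in>(UNIV::'n set). -1/2)"
    using assms by (intro powr_sum[symmetric]) auto
  moreover have "(\<Prod>i\<in>UNIV. c powr (-(real (\<alpha> i)+1)/2)) = c powr (\<Sum>i\<in>UNIV. -(real (\<alpha> i)+1)/2)"
    using assms by (intro powr_sum[symmetric]) auto
  ultimately show ?thesis unfolding sum_half prod.distrib by simp
qed

lemma term_id:
  fixes x y :: "real^'n" and \<alpha> :: "'n \<Rightarrow> nat"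
  assumes t: "t > 0"
  shows "(\<Prod>i\<in>UNIV. (-(y $ i))^(\<alpha> i) / fact (\<alpha> i) * Fg t (\<alpha> i) (x $ i))
    = mi_pow y \<alpha> * (pi powr (-(real CARD('n)/2)) * exp (-(norm x^2)/(4*t)) / mi_fact \<alpha> *
       (4*t) powr (-((real (mi_abs \<alpha>) + real CARD('n))/2)) *
       (\<Prod>i\<in>UNIV. hermite (\<alpha> i) (x $ i / (2 * sqrt t))))"
proof -
  have fac: "(-(y $ i))^(\<alpha> i) / fact (\<alpha> i) * Fg t (\<alpha> i) (x $ i)
     = ((y $ i)^(\<alpha> i) / fact (\<alpha> i)) * ((pi powr (-1/2) * (4*t) powr (-(real (\<alpha> i)+1)/2)) *
        (exp (- ((x $ i)^2)/(4*t)) * hermite (\<alpha> i) (x $ i / (2 * sqrt t))))" for i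
  proof -
    have "Fg t (\<alpha> i) (x $ i) = (pi powr (-1/2) * (4*t) powr (-(real (\<alpha> i)+1)/2)) *
        ((-1)^(\<alpha> i) * exp (- ((x $ i)^2)/(4*t)) * hermite (\<alpha> i) (x $ i / (2 * sqrt t)))"
      unfolding Fg_def const1[OF t, symmetric] phi_hermite sq_c[OF t] by simp
    moreover have "(-(y $ i))^(\<alpha> i) = (-1)^(\<alpha> i) * (y $ i)^(\<alpha> i)" by (rule power_minus)
    moreover have "(-1::real)^(\<alpha> i) * (-1)^(\<alpha> i) = 1" by simp
    ultimately show ?thesis by (simp add: field_simps)
  qed
  have "(\<Prod>i\<in>UNIV. (-(y $ i))^(\<alpha> i) / fact (\<alpha> i) * Fg t (\<alpha> i) (x $ i))
    = (\<Prod>i\<in>UNIV. (y $ i)^(\<alpha> i) / fact (\<alpha> i)) * ((\<Prod>i\<in>UNIV. pi powr (-1/2) * (4*t) powr (-(real (\<alpha> i)+1)/2)) *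
        ((\<Prod>i\<in>UNIV. exp (- ((x $ i)^2)/(4*t))) * (\<Prod>i\<in>UNIV. hermite (\<alpha> i) (x $ i / (2 * sqrt t)))))"
    unfolding fac prod.distrib ..
  also have "\<dots> = mi_pow y \<alpha> / mi_fact \<alpha> * ((pi powr (-(real CARD('n)/2)) * (4*t) powr (-((real (mi_abs \<alpha>) + real CARD('n))/2))) *
        (exp (-(norm x^2)/(4*t)) * (\<Prod>i\<in>UNIV. hermite (\<alpha> i) (x $ i / (2 * sqrt t)))))"
  proof -
    have hh: "(\<Prod>i\<in>UNIV. pi powr (-1/2) * (4*t) powr (-(real (\<alpha> i)+1)/2)) = pi powr (-(real CARD('n)/2)) * (4*t) powr (-((real (mi_abs \<alpha>) + real CARD('n))/2))"
      by (rule prod_half_powr) (use t in auto)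
    show ?thesis unfolding prod_dividef hh prod_exp_sq mi_pow_def mi_fact_def ..
  qed
  finally show ?thesis by (simp add: mult_ac)
qed

lemma bnd_id:
  fixes y :: "real^'n" and \<alpha> :: "'n \<Rightarrow> nat"
  assumes t: "t > 0"
  shows "(\<Prod>i\<in>UNIV. \<bar>-(y $ i)\<bar>^(\<alpha> i) / fact (\<alpha> i) * Bg t (\<alpha> i))
    = \<bar>mi_pow y \<alpha>\<bar> * ((2*pi) powr (-(real CARD('n)/2)) * (2*t) powr (-((real (mi_abs \<alpha>) + real CARD('n))/2)) /
       sqrt (mi_fact \<alpha>) * (\<Prod>i\<in>UNIV. real (\<alpha> i) + 1) powr (-(1/12)))"
proof -
  have fac: "\<bar>-(y $ i)\<bar>^(\<alpha> i) / fact (\<alpha> i) * Bg t (\<alpha> i)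
     = \<bar>y $ i\<bar>^(\<alpha> i) * (((2*pi) powr (-1/2) * (2*t) powr (-(real (\<alpha> i)+1)/2)) *
        ((real (\<alpha> i) + 1) powr (-(1/12)) * fact (\<alpha> i) powr (-1/2)))" for i
  proof -
    define m where "m = \<alpha> i"
    have f0: "(fact m :: real) > 0" by simp
    have "sqrt (fact m) / fact m = (fact m :: real) powr (-1/2)"
    proof -
      have "(fact m :: real) powr (-1/2) = fact m powr (1/2 - 1)" by simp
      also have "\<dots> = fact m powr (1/2) / fact m powr 1" by (rule powr_diff)
      also have "\<dots> = sqrt (fact m) / fact m" using f0 by (simp add: powr_half_sqrt)
      finally show ?thesis by simp
    qed
    moreover have "Bg t m = (Kc t * (1/(2 * sqrt t))^m * sqrt (2^m)) * sqrt (fact m) * (real m+1) powr (-1/12)"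
      unfolding Bg_def by (simp add: real_sqrt_mult mult_ac)
    ultimately have "\<bar>-(y $ i)\<bar>^m / fact m * Bg t m
        = \<bar>y $ i\<bar>^m * (((2*pi) powr (-1/2) * (2*t) powr (-(real m+1)/2)) * ((real m + 1) powr (-(1/12)) * fact m powr (-1/2)))"
      unfolding const2[OF t] by (simp add: field_simps)
    then show ?thesis unfolding m_def .
  qed
  have fp: "(\<Prod>i\<in>UNIV. fact (\<alpha> i) powr (-1/2)) = 1 / sqrt (mi_fact \<alpha>)"
  proof -
    have "(\<Prod>i\<in>UNIV. fact (\<alpha> i) powr (-1/2)) = mi_fact \<alpha> powr (-1/2)"
      unfolding mi_fact_def by (simp add: prod_powr_distrib)
    also have "\<dots> = 1 / mi_fact \<alpha> powr (1/2)" by (simp add: powr_minus_divide)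
    also have "mi_fact \<alpha> powr (1/2) = sqrt (mi_fact \<alpha>)"
      unfolding mi_fact_def by (intro powr_half_sqrt prod_nonneg) auto
    finally show ?thesis .
  qed
  have "(\<Prod>i\<in>UNIV. \<bar>-(y $ i)\<bar>^(\<alpha> i) / fact (\<alpha> i) * Bg t (\<alpha> i))
    = (\<Prod>i\<in>UNIV. \<bar>y $ i\<bar>^(\<alpha> i)) * ((\<Prod>i\<in>UNIV. (2*pi) powr (-1/2) * (2*t) powr (-(real (\<alpha> i)+1)/2)) *
        ((\<Prod>i\<in>UNIV. (real (\<alpha> i) + 1) powr (-(1/12))) * (\<Prod>i\<in>UNIV. fact (\<alpha> i) powr (-1/2))))"
    unfolding fac prod.distrib ..
  also have "\<dots> = \<bar>mi_pow y \<alpha>\<bar> * (((2*pi) powr (-(real CARD('n)/2)) * (2*t) powr (-((real (mi_abs \<alpha>) + real CARD('n))/2))) *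
        ((\<Prod>i\<in>UNIV. real (\<alpha> i) + 1) powr (-(1/12)) * (1 / sqrt (mi_fact \<alpha>))))"
  proof -
    have hh: "(\<Prod>i\<in>UNIV. (2*pi) powr (-1/2) * (2*t) powr (-(real (\<alpha> i)+1)/2)) = (2*pi) powr (-(real CARD('n)/2)) * (2*t) powr (-((real (mi_abs \<alpha>) + real CARD('n))/2))"
      by (rule prod_half_powr) (use t in auto)
    have hy: "(\<Prod>i\<in>UNIV. \<bar>y $ i\<bar>^(\<alpha> i)) = \<bar>mi_pow y \<alpha>\<bar>"
      unfolding mi_pow_def abs_prod power_abs ..
    have hp: "(\<Prod>i\<in>UNIV. (real (\<alpha> i) + 1) powr (-(1/12))) = (\<Prod>i\<in>UNIV. real (\<alpha> i) + 1) powr (-(1/12))"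
      by (simp add: prod_powr_distrib)
    show ?thesis unfolding fp hh hy hp ..
  qed
  finally show ?thesis by (simp add: mult_ac)
qed



lemma cont_meas: "continuous_on UNIV f \<Longrightarrow> (f::'a::euclidean_space \<Rightarrow> real) \<in> borel_measurable lebesgue"
  by (drule borel_measurable_continuous_onI) (simp add: measurable_completion)

lemma int_bound:
  fixes P T Bn u :: "'a \<Rightarrow> real"
  assumes "integrable M (\<lambda>y. P y * u y)" "integrable M (\<lambda>y. T y * u y)" "integrable M (\<lambda>y. Bn y * \<bar>u y\<bar>)"
    and "\<And>y. \<bar>P y - T y\<bar> \<le> Bn y"
  shows "\<bar>(\<integral>y. P y * u y \<partial>M) - (\<integral>y. T y * u y \<partial>M)\<bar> \<le> (\<integral>y. Bn y * \<bar>u y\<bar> \<partial>M)"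
proof -
  have "(\<integral>y. P y * u y \<partial>M) - (\<integral>y. T y * u y \<partial>M) = (\<integral>y. (P y - T y) * u y \<partial>M)"
    using assms(1,2) by (simp add: left_diff_distrib)
  also have "\<bar>\<dots>\<bar> \<le> (\<integral>y. \<bar>(P y - T y) * u y\<bar> \<partial>M)" by (rule integral_abs_bound)
  also have "\<dots> \<le> (\<integral>y. Bn y * \<bar>u y\<bar> \<partial>M)"
  proof (rule integral_mono)
    have "integrable M (\<lambda>y. P y * u y - T y * u y)" using assms(1,2) by simp
    then show "integrable M (\<lambda>y. \<bar>(P y - T y) * u y\<bar>)" by (simp add: left_diff_distrib)
    show "integrable M (\<lambda>y. Bn y * \<bar>u y\<bar>)" by fact
    fix y show "\<bar>(P y - T y) * u y\<bar> \<le> Bn y * \<bar>u y\<bar>"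
      unfolding abs_mult using assms(4) by (intro mult_right_mono) auto
  qed
  finally show ?thesis .
qed

lemma mipow_le:
  fixes y :: "real^'n"
  assumes "mi_abs \<alpha> \<le> k+1"
  shows "\<bar>mi_pow y \<alpha>\<bar> \<le> 1 + norm y ^ (k+1)"
proof -
  have "\<bar>mi_pow y \<alpha>\<bar> = (\<Prod>i\<in>UNIV. \<bar>y $ i\<bar>^(\<alpha> i))" unfolding mi_pow_def abs_prod power_abs ..
  also have "\<dots> \<le> (\<Prod>i\<in>UNIV. norm y^(\<alpha> i))"
    by (intro prod_mono conjI power_mono component_le_norm_cart) auto
  also have "\<dots> = norm y ^ mi_abs \<alpha>" unfolding mi_abs_def power_sum ..
  also have "\<dots> \<le> 1 + norm y ^ (k+1)"
  proof (cases "norm y \<le> 1")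
    case True
    then have "norm y ^ mi_abs \<alpha> \<le> 1" by (intro power_le_one) auto
    moreover have "norm y ^ (k+1) \<ge> 0" by simp
    ultimately show ?thesis by linarith
  next
    case False
    then have "norm y ^ mi_abs \<alpha> \<le> norm y ^ (k+1)" using assms by (intro power_increasing) auto
    then show ?thesis by linarith
  qed
  finally show ?thesis .
qed

lemma mipow_cont: "continuous_on UNIV (\<lambda>y::real^'n. mi_pow y \<alpha>)"
  unfolding mi_pow_def by (intro continuous_intros)

lemma int_mipow:
  fixes u0 :: "real^'n \<Rightarrow> real"
  assumes meas: "u0 \<in> borel_measurable lebesgue"
    and L1: "integrable lebesgue (\<lambda>y. \<bar>u0 y\<bar> * (1 + norm y ^ (k + 1)))"
    and a: "mi_abs \<alpha> \<le> k+1"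
  shows "integrable lebesgue (\<lambda>y. mi_pow y \<alpha> * u0 y)"
proof (rule Bochner_Integration.integrable_bound[OF L1])
  show "(\<lambda>y. mi_pow y \<alpha> * u0 y) \<in> borel_measurable lebesgue"
    using meas cont_meas[OF mipow_cont] by measurable
  show "AE y in lebesgue. norm (mi_pow y \<alpha> * u0 y) \<le> norm (\<bar>u0 y\<bar> * (1 + norm y ^ (k + 1)))"
  proof (intro AE_I2)
    fix y
    have "\<bar>mi_pow y \<alpha> * u0 y\<bar> \<le> (1 + norm y ^ (k+1)) * \<bar>u0 y\<bar>"
      unfolding abs_mult by (intro mult_right_mono mipow_le a) auto
    then show "norm (mi_pow y \<alpha> * u0 y) \<le> norm (\<bar>u0 y\<bar> * (1 + norm y ^ (k + 1)))"
      by (simp add: abs_mult mult.commute)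
  qed
qed

theorem mainTheorem2:
  fixes u0 :: "real^'n \<Rightarrow> real" and k :: nat and x :: "real^'n" and t :: real
  assumes meas: "u0 \<in> borel_measurable lebesgue"
    and L1: "integrable lebesgue (\<lambda>y. \<bar>u0 y\<bar> * (1 + norm y ^ (k + 1)))"
    and t: "t > 0"
  shows "\<bar>heat_solution u0 x t
      - pi powr (- (real CARD('n) / 2)) * exp (- (norm x ^ 2) / (4 * t)) *
        (\<Sum>\<alpha>\<in>{\<alpha>::'n \<Rightarrow> nat. mi_abs \<alpha> \<le> k}.
           (\<integral>y. mi_pow y \<alpha> * u0 y \<partial>lebesgue) / mi_fact \<alpha> *
           (4 * t) powr (- ((real (mi_abs \<alpha>) + real CARD('n)) / 2)) *
           (\<Prod>i\<in>UNIV. hermite (\<alpha> i) (x $ i / (2 * sqrt t))))\<bar>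
    \<le> (2 * pi) powr (- (real CARD('n) / 2)) * (2 * t) powr (- ((real k + real CARD('n) + 1) / 2)) *
        (\<Sum>\<alpha>\<in>{\<alpha>::'n \<Rightarrow> nat. mi_abs \<alpha> = k + 1}.
           (\<integral>y. \<bar>mi_pow y \<alpha> * u0 y\<bar> \<partial>lebesgue) / sqrt (mi_fact \<alpha>) *
           (\<Prod>i\<in>UNIV. real (\<alpha> i) + 1) powr (- (1 / 12)))"
proof -
  define cc where "cc = (\<lambda>\<alpha>::'n\<Rightarrow>nat. pi powr (-(real CARD('n)/2)) * exp (-(norm x^2)/(4*t)) / mi_fact \<alpha> *
       (4*t) powr (-((real (mi_abs \<alpha>) + real CARD('n))/2)) *
       (\<Prod>i\<in>UNIV. hermite (\<alpha> i) (x $ i / (2 * sqrt t))))"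
  define cb where "cb = (\<lambda>\<alpha>::'n\<Rightarrow>nat. (2*pi) powr (-(real CARD('n)/2)) * (2*t) powr (-((real (mi_abs \<alpha>) + real CARD('n))/2)) /
       sqrt (mi_fact \<alpha>) * (\<Prod>i\<in>UNIV. real (\<alpha> i) + 1) powr (-(1/12)))"
  define S1 where "S1 = {\<alpha>::'n \<Rightarrow> nat. mi_abs \<alpha> \<le> k}"
  define S2 where "S2 = {\<alpha>::'n \<Rightarrow> nat. mi_abs \<alpha> = k+1}"
  have S1M: "S1 = MIS UNIV (\<lambda>v. v \<le> k)" unfolding S1_def MIS_def mi_abs_def by auto
  have S2M: "S2 = MIS UNIV (\<lambda>v. v = k+1)" unfolding S2_def MIS_def mi_abs_def by auto
  have finS1: "finite S1" unfolding S1M by (rule finite_MIS[of _ _ k]) auto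
  have finS2: "finite S2" unfolding S2M by (rule finite_MIS[of _ _ "k+1"]) auto
  define P where "P = (\<lambda>y. heat_kernel (x - y) t)"
  define T where "T = (\<lambda>y. \<Sum>\<alpha>\<in>S1. cc \<alpha> * mi_pow y \<alpha>)"
  define Bn where "Bn = (\<lambda>y. \<Sum>\<alpha>\<in>S2. cb \<alpha> * \<bar>mi_pow y \<alpha>\<bar>)"
  have pw: "\<bar>P y - T y\<bar> \<le> Bn y" for y
  proof -
    have "\<bar>(\<Prod>i\<in>UNIV. Fg t 0 (x $ i + -(y $ i))) -
     (\<Sum>\<alpha>\<in>MIS UNIV (\<lambda>v. v \<le> k). \<Prod>i\<in>UNIV. (-(y $ i)) ^ \<alpha> i / fact (\<alpha> i) * Fg t (\<alpha> i) (x $ i))\<bar>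
     \<le> (\<Sum>\<alpha>\<in>MIS UNIV (\<lambda>v. v = k+1). \<Prod>i\<in>UNIV. \<bar>-(y $ i)\<bar> ^ \<alpha> i / fact (\<alpha> i) * Bg t (\<alpha> i))"
      by (rule taylor_prod[where F="\<lambda>i. Fg t" and B="\<lambda>i. Bg t"]) (use Fg_deriv Fg_bound t in auto)
    moreover have "(\<Prod>i\<in>UNIV. Fg t 0 (x $ i + -(y $ i))) = P y"
      unfolding P_def hk_prod[OF t] by simp
    moreover have "(\<Sum>\<alpha>\<in>MIS UNIV (\<lambda>v. v \<le> k). \<Prod>i\<in>UNIV. (-(y $ i)) ^ \<alpha> i / fact (\<alpha> i) * Fg t (\<alpha> i) (x $ i)) = T y"
      unfolding T_def S1M[symmetric] term_id[OF t] cc_def by (simp add: mult_ac)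
    moreover have "(\<Sum>\<alpha>\<in>MIS UNIV (\<lambda>v. v = k+1). \<Prod>i\<in>UNIV. \<bar>-(y $ i)\<bar> ^ \<alpha> i / fact (\<alpha> i) * Bg t (\<alpha> i)) = Bn y"
      unfolding Bn_def S2M[symmetric] bnd_id[OF t] cb_def by (simp add: mult_ac)
    ultimately show ?thesis by simp
  qed
  have IA: "integrable lebesgue (\<lambda>y. mi_pow y \<alpha> * u0 y)" if "mi_abs \<alpha> \<le> k+1" for \<alpha>
    using int_mipow[OF meas L1 that] .
  have IA1: "integrable lebesgue (\<lambda>y. mi_pow y \<alpha> * u0 y)" if "\<alpha> \<in> S1" for \<alpha>
    using that unfolding S1_def by (intro IA) auto
  have IA2: "integrable lebesgue (\<lambda>y. mi_pow y \<alpha> * u0 y)" if "\<alpha> \<in> S2" for \<alpha>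
    using that unfolding S2_def by (intro IA) auto
  have IP: "integrable lebesgue (\<lambda>y. P y * u0 y)"
  proof (rule Bochner_Integration.integrable_bound)
    show "integrable lebesgue (\<lambda>y. (4 * pi * t) powr (- (real CARD('n) / 2)) * (\<bar>u0 y\<bar> * (1 + norm y ^ (k + 1))))"
      using L1 by (rule integrable_mult_right)
    have "continuous_on UNIV P" unfolding P_def heat_kernel_def using t by (intro continuous_intros) auto
    then show "(\<lambda>y. P y * u0 y) \<in> borel_measurable lebesgue"
      using meas cont_meas by measurable
    show "AE y in lebesgue. norm (P y * u0 y) \<le> norm ((4 * pi * t) powr (- (real CARD('n) / 2)) * (\<bar>u0 y\<bar> * (1 + norm y ^ (k + 1))))"
    proof (intro AE_I2)
      fix y
      have P0: "\<bar>P y\<bar> \<le> (4 * pi * t) powr (- (real CARD('n) / 2))"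
        unfolding P_def heat_kernel_def using t by (simp add: abs_mult)
      have u1: "\<bar>u0 y\<bar> \<le> \<bar>u0 y\<bar> * (1 + norm y ^ (k + 1))"
        by (simp add: algebra_simps)
      have "\<bar>P y * u0 y\<bar> \<le> (4 * pi * t) powr (- (real CARD('n) / 2)) * (\<bar>u0 y\<bar> * (1 + norm y ^ (k + 1)))"
        unfolding abs_mult by (intro mult_mono P0 u1) auto
      then show "norm (P y * u0 y) \<le> norm ((4 * pi * t) powr (- (real CARD('n) / 2)) * (\<bar>u0 y\<bar> * (1 + norm y ^ (k + 1))))"
        by simp
    qed
  qed
  have Teq: "(\<lambda>y. T y * u0 y) = (\<lambda>y. \<Sum>\<alpha>\<in>S1. cc \<alpha> * (mi_pow y \<alpha> * u0 y))"
    unfolding T_def by (simp add: sum_distrib_right sum_distrib_left mult_ac)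
  have Beq: "(\<lambda>y. Bn y * \<bar>u0 y\<bar>) = (\<lambda>y. \<Sum>\<alpha>\<in>S2. cb \<alpha> * \<bar>mi_pow y \<alpha> * u0 y\<bar>)"
    unfolding Bn_def by (simp add: sum_distrib_right sum_distrib_left mult_ac abs_mult)
  have IT: "integrable lebesgue (\<lambda>y. T y * u0 y)"
    unfolding Teq by (rule Bochner_Integration.integrable_sum) (auto intro!: integrable_mult_right IA1)
  have IB: "integrable lebesgue (\<lambda>y. Bn y * \<bar>u0 y\<bar>)"
    unfolding Beq by (rule Bochner_Integration.integrable_sum) (auto intro!: integrable_mult_right integrable_abs IA2)
  have L: "heat_solution u0 x t = (\<integral>y. P y * u0 y \<partial>lebesgue)"
    unfolding heat_solution_def P_def ..
  have M: "pi powr (- (real CARD('n) / 2)) * exp (- (norm x ^ 2) / (4 * t)) *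
        (\<Sum>\<alpha>\<in>{\<alpha>::'n \<Rightarrow> nat. mi_abs \<alpha> \<le> k}.
           (\<integral>y. mi_pow y \<alpha> * u0 y \<partial>lebesgue) / mi_fact \<alpha> *
           (4 * t) powr (- ((real (mi_abs \<alpha>) + real CARD('n)) / 2)) *
           (\<Prod>i\<in>UNIV. hermite (\<alpha> i) (x $ i / (2 * sqrt t))))
       = (\<integral>y. T y * u0 y \<partial>lebesgue)"
  proof -
    have "(\<integral>y. T y * u0 y \<partial>lebesgue) = (\<Sum>\<alpha>\<in>S1. cc \<alpha> * (\<integral>y. mi_pow y \<alpha> * u0 y \<partial>lebesgue))"
      unfolding Teq by (subst Bochner_Integration.integral_sum) (auto intro!: integrable_mult_right IA1)
    then show ?thesis unfolding S1_def cc_def by (simp add: sum_distrib_left mult_ac)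
  qed
  have R: "(2 * pi) powr (- (real CARD('n) / 2)) * (2 * t) powr (- ((real k + real CARD('n) + 1) / 2)) *
        (\<Sum>\<alpha>\<in>{\<alpha>::'n \<Rightarrow> nat. mi_abs \<alpha> = k + 1}.
           (\<integral>y. \<bar>mi_pow y \<alpha> * u0 y\<bar> \<partial>lebesgue) / sqrt (mi_fact \<alpha>) *
           (\<Prod>i\<in>UNIV. real (\<alpha> i) + 1) powr (- (1 / 12)))
       = (\<integral>y. Bn y * \<bar>u0 y\<bar> \<partial>lebesgue)"
  proof -
    have "(\<integral>y. Bn y * \<bar>u0 y\<bar> \<partial>lebesgue) = (\<Sum>\<alpha>\<in>S2. cb \<alpha> * (\<integral>y. \<bar>mi_pow y \<alpha> * u0 y\<bar> \<partial>lebesgue))"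
      unfolding Beq by (subst Bochner_Integration.integral_sum) (auto intro!: integrable_mult_right integrable_abs IA2)
    also have "\<dots> = (\<Sum>\<alpha>\<in>S2. (2 * pi) powr (- (real CARD('n) / 2)) * (2 * t) powr (- ((real k + real CARD('n) + 1) / 2)) *
           ((\<integral>y. \<bar>mi_pow y \<alpha> * u0 y\<bar> \<partial>lebesgue) / sqrt (mi_fact \<alpha>) *
           (\<Prod>i\<in>UNIV. real (\<alpha> i) + 1) powr (- (1 / 12))))"
    proof (rule sum.cong[OF refl])
      fix \<alpha> assume "\<alpha> \<in> S2"
      then have "real (mi_abs \<alpha>) + real CARD('n) = real k + real CARD('n) + 1" unfolding S2_def by simp
      then show "cb \<alpha> * (\<integral>y. \<bar>mi_pow y \<alpha> * u0 y\<bar> \<partial>lebesgue) = (2 * pi) powr (- (real CARD('n) / 2)) * (2 * t) powr (- ((real k + real CARD('n) + 1) / 2)) *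
           ((\<integral>y. \<bar>mi_pow y \<alpha> * u0 y\<bar> \<partial>lebesgue) / sqrt (mi_fact \<alpha>) *
           (\<Prod>i\<in>UNIV. real (\<alpha> i) + 1) powr (- (1 / 12)))"
        unfolding cb_def by (simp add: add_ac)
    qed
    finally show ?thesis unfolding S2_def by (simp add: sum_distrib_left)
  qed
  show ?thesis unfolding L M R by (rule int_bound[OF IP IT IB pw])
qed


end
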